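(* Let $F$ be the unique series in $\mathbb{Q}[x,\bar x,y,\bar y][[t]]$ satisfying $(1-St)F=\bar x\bar y-\bar x t[x^0]F-\bar y t[y^0]F$, and let $F_1=[x^<][y^<]F$. Then $$F_1(x,y,t)=\bar x\bar y\,Q(\bar x,\bar y,t),$$ where $Q(x,y,t)=\sum_{n\ge0}\sum_{i,j\ge0}a_{i,j,n}x^iy^jt^n$ and $a_{i,j,n}$ is the number of walks in $\mathbb{N}^2$ starting at $(0,0)$, ending at $(i,j)$, with $n$ steps from $\{(1,0),(-1,0),(0,1),(0,-1)\}$. Moreover $$F_1(x,y,t)-F_1(\bar x,y,t)=[y^<]\,\frac{xy-\bar xy-x\bar y+\bar x\bar y}{1-St}.$$
   Context: Notation: $\bar x=x^{-1}$, $\bar y=y^{-1}$, $S=x+y+\bar x+\bar y$; series in $\mathbb{Q}[x,\bar x,y,\bar y][[t]]$, with $1/(1-St)$ expanded as a power series in $t$. For $G=\sum c_{i,j,n}x^iy^jt^n$: $[x^0]G=\sum_{j,n}c_{0,j,n}y^jt^n$, $[y^0]G=\sum_{i,n}c_{i,0,n}x^it^n$; $[x^<]G=\sum_{i<0}c_{i,j,n}x^iy^jt^n$ (terms with negative $x$-exponent), and analogously $[y^<]$ for $y$. *)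

theory Defs
  imports Complex_Main
begin

text \<open>A series G in Q[x,1/x,y,1/y][[t]] is represented by its coefficient function:
  G i j n is the coefficient of x^i y^j t^n.\<close>
type_synonym lser = "int \<Rightarrow> int \<Rightarrow> nat \<Rightarrow> rat"

definition is_lser :: "lser \<Rightarrow> bool" where
  "is_lser G \<longleftrightarrow> (\<forall>n. finite {(i, j). G i j n \<noteq> 0})"

definition monom :: "int \<Rightarrow> int \<Rightarrow> nat \<Rightarrow> lser" where
  "monom a b k = (\<lambda>i j n. if i = a \<and> j = b \<and> n = k then 1 else 0)"

definition mono_mul :: "int \<Rightarrow> int \<Rightarrow> nat \<Rightarrow> lser \<Rightarrow> lser" where
  "mono_mul a b k G = (\<lambda>i j n. if k \<le> n then G (i - a) (j - b) (n - k) else 0)"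

text \<open>Multiplication by S = x + 1/x + y + 1/y.\<close>
definition S_mul :: "lser \<Rightarrow> lser" where
  "S_mul G = (\<lambda>i j n. G (i - 1) j n + G (i + 1) j n + G i (j - 1) n + G i (j + 1) n)"

definition coeff_x0 :: "lser \<Rightarrow> lser" where
  "coeff_x0 G = (\<lambda>i j n. if i = 0 then G 0 j n else 0)"

definition coeff_y0 :: "lser \<Rightarrow> lser" where
  "coeff_y0 G = (\<lambda>i j n. if j = 0 then G i 0 n else 0)"

text \<open>[x^<] G and [y^<] G: terms with negative x- (resp. y-) exponent.\<close>
definition xneg :: "lser \<Rightarrow> lser" where
  "xneg G = (\<lambda>i j n. if i < 0 then G i j n else 0)"

definition yneg :: "lser \<Rightarrow> lser" where
  "yneg G = (\<lambda>i j n. if j < 0 then G i j n else 0)"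

definition subst_xinv :: "lser \<Rightarrow> lser" where
  "subst_xinv G = (\<lambda>i j n. G (- i) j n)"

definition subst_yinv :: "lser \<Rightarrow> lser" where
  "subst_yinv G = (\<lambda>i j n. G i (- j) n)"

text \<open>Coefficients of the Laurent polynomial S^n.\<close>
fun powS :: "nat \<Rightarrow> int \<Rightarrow> int \<Rightarrow> rat" where
  "powS 0 i j = (if i = 0 \<and> j = 0 then 1 else 0)"
| "powS (Suc n) i j = powS n (i - 1) j + powS n (i + 1) j + powS n i (j - 1) + powS n i (j + 1)"

text \<open>1/(1 - S t) = sum_n S^n t^n, expanded as a power series in t.\<close>
definition recip_1_minus_St :: lser where
  "recip_1_minus_St = (\<lambda>i j n. powS n i j)"

text \<open>Multiplication by the Laurent polynomial x y - (1/x) y - x (1/y) + (1/x)(1/y).\<close>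
definition numer_mul :: "lser \<Rightarrow> lser" where
  "numer_mul G = (\<lambda>i j n. G (i - 1) (j - 1) n - G (i + 1) (j - 1) n
                          - G (i - 1) (j + 1) n + G (i + 1) (j + 1) n)"

definition steps4 :: "(int \<times> int) set" where
  "steps4 = {(1, 0), (-1, 0), (0, 1), (0, -1)}"

definition endpoint :: "(int \<times> int) list \<Rightarrow> int \<times> int" where
  "endpoint ws = (sum_list (map fst ws), sum_list (map snd ws))"

definition quadrant_walks :: "int \<Rightarrow> int \<Rightarrow> nat \<Rightarrow> (int \<times> int) list set" where
  "quadrant_walks i j n = {ws. length ws = n \<and> set ws \<subseteq> steps4
      \<and> (\<forall>k \<le> n. 0 \<le> fst (endpoint (take k ws)) \<and> 0 \<le> snd (endpoint (take k ws)))
      \<and> endpoint ws = (i, j)}"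

definition a_walks :: "nat \<Rightarrow> nat \<Rightarrow> nat \<Rightarrow> nat" where
  "a_walks i j n = card (quadrant_walks (int i) (int j) n)"

definition Qser :: lser where
  "Qser = (\<lambda>i j n. if 0 \<le> i \<and> 0 \<le> j then of_nat (a_walks (nat i) (nat j) n) else 0)"

definition satisfies_eqn :: "lser \<Rightarrow> bool" where
  "satisfies_eqn F \<longleftrightarrow> (\<forall>i j n.
     F i j n - mono_mul 0 0 1 (S_mul F) i j n
       = monom (-1) (-1) 0 i j n - mono_mul (-1) 0 1 (coeff_x0 F) i j n
         - mono_mul 0 (-1) 1 (coeff_y0 F) i j n)"

end

theory Submission
  imports Defs
begin

lemma endpoint_snoc:
  "endpoint (vs @ [s]) = (fst (endpoint vs) + fst s, snd (endpoint vs) + snd s)"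
  by (simp add: endpoint_def)

lemma qw_snoc:
  assumes "0 \<le> i" "0 \<le> j"
  shows "(vs @ [s] \<in> quadrant_walks i j (Suc n)) \<longleftrightarrow>
         (s \<in> steps4 \<and> vs \<in> quadrant_walks (i - fst s) (j - snd s) n)"
proof (cases "length vs = n")
  case True
  define Pr where "Pr = (\<lambda>w. 0 \<le> fst (endpoint w) \<and> 0 \<le> snd (endpoint w))"
  have tk: "take k (vs @ [s]) = take k vs" if "k \<le> n" for k
    using that True by simp
  have "(\<forall>k \<le> Suc n. Pr (take k (vs @ [s]))) \<longleftrightarrow>
        (\<forall>k \<le> n. Pr (take k (vs @ [s]))) \<and> Pr (take (Suc n) (vs @ [s]))"
    by (auto simp: le_Suc_eq)
  also have "\<dots> \<longleftrightarrow> (\<forall>k \<le> n. Pr (take k vs)) \<and> Pr (vs @ [s])"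
    using tk True by auto
  finally have pre: "(\<forall>k \<le> Suc n. Pr (take k (vs @ [s]))) \<longleftrightarrow>
       (\<forall>k \<le> n. Pr (take k vs)) \<and> Pr (vs @ [s])" .
  show ?thesis
  proof
    assume A: "vs @ [s] \<in> quadrant_walks i j (Suc n)"
    then have "\<forall>k \<le> Suc n. Pr (take k (vs @ [s]))"
      unfolding quadrant_walks_def Pr_def by blast
    with pre have "\<forall>k \<le> n. Pr (take k vs)" by blast
    with A True show "s \<in> steps4 \<and> vs \<in> quadrant_walks (i - fst s) (j - snd s) n"
      unfolding quadrant_walks_def Pr_def by (auto simp: endpoint_snoc)
  next
    assume B: "s \<in> steps4 \<and> vs \<in> quadrant_walks (i - fst s) (j - snd s) n"
    then have "\<forall>k \<le> n. Pr (take k vs)" "endpoint (vs @ [s]) = (i, j)"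
      unfolding quadrant_walks_def Pr_def by (auto simp: endpoint_snoc)
    moreover have "Pr (vs @ [s])" using calculation(2) assms by (simp add: Pr_def)
    ultimately have "\<forall>k \<le> Suc n. Pr (take k (vs @ [s]))" using pre by blast
    with B True \<open>endpoint (vs @ [s]) = (i, j)\<close> show "vs @ [s] \<in> quadrant_walks i j (Suc n)"
      unfolding quadrant_walks_def Pr_def by auto
  qed
next
  case False
  then show ?thesis unfolding quadrant_walks_def by auto
qed

lemma qw_Suc:
  assumes "0 \<le> i" "0 \<le> j"
  shows "quadrant_walks i j (Suc n) =
    (\<Union>s\<in>steps4. (\<lambda>vs. vs @ [s]) ` quadrant_walks (i - fst s) (j - snd s) n)"
proof (intro set_eqI iffI)
  fix ws assume W: "ws \<in> quadrant_walks i j (Suc n)"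
  then have "ws \<noteq> []" by (auto simp: quadrant_walks_def)
  then obtain vs s where ws: "ws = vs @ [s]" by (metis rev_exhaust)
  with W qw_snoc[OF assms] show "ws \<in> (\<Union>s\<in>steps4. (\<lambda>vs. vs @ [s]) ` quadrant_walks (i - fst s) (j - snd s) n)"
    by blast
next
  fix ws assume "ws \<in> (\<Union>s\<in>steps4. (\<lambda>vs. vs @ [s]) ` quadrant_walks (i - fst s) (j - snd s) n)"
  then obtain s vs where "s \<in> steps4" "vs \<in> quadrant_walks (i - fst s) (j - snd s) n" "ws = vs @ [s]"
    by blast
  with qw_snoc[OF assms] show "ws \<in> quadrant_walks i j (Suc n)" by blast
qed

lemma finite_qw: "finite (quadrant_walks i j n)"
proof -
  have "quadrant_walks i j n \<subseteq> {xs. set xs \<subseteq> steps4 \<and> length xs = n}"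
    unfolding quadrant_walks_def by blast
  moreover have "finite steps4" by (simp add: steps4_def)
  ultimately show ?thesis using finite_lists_length_eq finite_subset by blast
qed

lemma card_qw_Suc:
  assumes "0 \<le> i" "0 \<le> j"
  shows "card (quadrant_walks i j (Suc n)) = card (quadrant_walks (i - 1) j n)
     + card (quadrant_walks (i + 1) j n) + card (quadrant_walks i (j - 1) n)
     + card (quadrant_walks i (j + 1) n)"
proof -
  have d: "\<forall>s\<in>steps4. \<forall>t\<in>steps4. s \<noteq> t \<longrightarrow>
     (\<lambda>vs. vs @ [s]) ` quadrant_walks (i - fst s) (j - snd s) n \<inter>
     (\<lambda>vs. vs @ [t]) ` quadrant_walks (i - fst t) (j - snd t) n = {}"
    by blast
  have "card (quadrant_walks i j (Suc n)) =
    (\<Sum>s\<in>steps4. card ((\<lambda>vs. vs @ [s]) ` quadrant_walks (i - fst s) (j - snd s) n))"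
    unfolding qw_Suc[OF assms]
    by (rule card_UN_disjoint[OF _ _ d]) (simp_all add: finite_qw steps4_def)
  also have "\<dots> = (\<Sum>s\<in>steps4. card (quadrant_walks (i - fst s) (j - snd s) n))"
    by (intro sum.cong refl card_image) (auto simp: inj_on_def)
  also have "\<dots> = card (quadrant_walks (i - 1) j n)
     + card (quadrant_walks (i + 1) j n) + card (quadrant_walks i (j - 1) n)
     + card (quadrant_walks i (j + 1) n)"
    by (simp add: steps4_def)
  finally show ?thesis .
qed

lemma qw_neg: "ws \<in> quadrant_walks i j n \<Longrightarrow> 0 \<le> i \<and> 0 \<le> j"
proof -
  assume "ws \<in> quadrant_walks i j n"
  then have L: "length ws = n" and P: "\<forall>k \<le> n. 0 \<le> fst (endpoint (take k ws)) \<and> 0 \<le> snd (endpoint (take k ws))"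
    and Ep: "endpoint ws = (i, j)"
    unfolding quadrant_walks_def by blast+
  from P have "0 \<le> fst (endpoint (take n ws)) \<and> 0 \<le> snd (endpoint (take n ws))" by blast
  then show ?thesis using L Ep by simp
qed

lemma Qser_neg: "\<not> (0 \<le> i \<and> 0 \<le> j) \<Longrightarrow> Qser i j n = 0"
  unfolding Qser_def by auto

lemma Qser_card: "Qser i j n = of_nat (card (quadrant_walks i j n))"
proof (cases "0 \<le> i \<and> 0 \<le> j")
  case True then show ?thesis by (simp add: Qser_def a_walks_def)
next
  case False
  then have "quadrant_walks i j n = {}" using qw_neg by blast
  with False show ?thesis using Qser_neg by simp
qed

lemma Qser_0: "Qser i j 0 = (if i = 0 \<and> j = 0 then 1 else 0)"
proof -
  have "quadrant_walks i j 0 = (if i = 0 \<and> j = 0 then {[]} else {})"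
    by (auto simp: quadrant_walks_def endpoint_def)
  then show ?thesis by (simp add: Qser_card)
qed

lemma Qser_Suc: "Qser i j (Suc n) = (if 0 \<le> i \<and> 0 \<le> j then
   Qser (i - 1) j n + Qser (i + 1) j n + Qser i (j - 1) n + Qser i (j + 1) n else 0)"
proof (cases "0 \<le> i \<and> 0 \<le> j")
  case True then show ?thesis by (simp add: Qser_card card_qw_Suc)
next
  case False then show ?thesis using Qser_neg[OF False] by (simp only: if_False)
qed

definition E :: "nat \<Rightarrow> int \<Rightarrow> int \<Rightarrow> rat" where
  "E n i j = powS n i j - powS n (-i-2) j - powS n i (-j-2) + powS n (-i-2) (-j-2)"

lemma E_Suc: "E (Suc n) i j = E n (i - 1) j + E n (i + 1) j + E n i (j - 1) + E n i (j + 1)"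
proof -
  have a: "-(i-1)-2 = -i-2+1" "-(i+1)-2 = -i-2-1" "-(j-1)-2 = -j-2+1" "-(j+1)-2 = -j-2-1"
    by simp_all
  show ?thesis unfolding E_def a by simp
qed

lemma E_0: "0 \<le> i \<Longrightarrow> 0 \<le> j \<Longrightarrow> E 0 i j = (if i = 0 \<and> j = 0 then 1 else 0)"
  by (simp add: E_def)

lemma E_m1x: "E n (-1) j = 0" by (simp add: E_def)
lemma E_m1y: "E n i (-1) = 0" by (simp add: E_def)

lemma Qser_E: "Qser i j n = (if 0 \<le> i \<and> 0 \<le> j then E n i j else 0)"
proof (induction n arbitrary: i j)
  case 0
  then show ?case by (auto simp: Qser_0 E_0)
next
  case (Suc n)
  show ?case
  proof (cases "0 \<le> i \<and> 0 \<le> j")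
    case True
    have 1: "Qser (i - 1) j n = E n (i - 1) j"
      using True Suc.IH[of "i-1" j] by (cases "i = 0") (auto simp: E_m1x)
    have 2: "Qser i (j - 1) n = E n i (j - 1)"
      using True Suc.IH[of i "j-1"] by (cases "j = 0") (auto simp: E_m1y)
    have 3: "Qser (i + 1) j n = E n (i + 1) j" "Qser i (j + 1) n = E n i (j + 1)"
      using True Suc.IH by auto
    show ?thesis using True by (simp add: Qser_Suc 1 2 3 E_Suc)
  next
    case False
    then show ?thesis using Qser_neg[OF False] by (simp only: if_False)
  qed
qed

lemma powS_negx: "powS n (-i) j = powS n i j"
proof (induction n arbitrary: i j)
  case 0 then show ?case by simp
next
  case (Suc n)
  have "-(i+1) = -i-1" "-(i-1) = -i+1" by simp_all
  then have a: "powS n (- i - 1) j = powS n (i + 1) j" "powS n (- i + 1) j = powS n (i - 1) j"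
    using Suc.IH[of "i+1" j] Suc.IH[of "i-1" j] by metis+
  have c: "powS (Suc n) (-i) j = powS n (- i - 1) j + powS n (- i + 1) j + powS n (-i) (j - 1) + powS n (-i) (j + 1)"
    by (simp only: powS.simps diff_minus_eq_add)
  show ?case unfolding c a Suc.IH by simp
qed
lemma powS_negy: "powS n i (-j) = powS n i j"
proof (induction n arbitrary: i j)
  case 0 then show ?case by simp
next
  case (Suc n)
  have "-(j+1) = -j-1" "-(j-1) = -j+1" by simp_all
  then have a: "powS n i (- j - 1) = powS n i (j + 1)" "powS n i (- j + 1) = powS n i (j - 1)"
    using Suc.IH[of i "j+1"] Suc.IH[of i "j-1"] by metis+
  have c: "powS (Suc n) i (-j) = powS n (i - 1) (-j) + powS n (i + 1) (-j) + powS n i (- j - 1) + powS n i (- j + 1)"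
    by (simp only: powS.simps diff_minus_eq_add)
  show ?case unfolding c a Suc.IH by simp
qed

lemma powS_negx': "a + c = 0 \<Longrightarrow> powS n a b = powS n c b"
proof -
  assume "a + c = 0"
  then have "a = - c" by arith
  then show ?thesis by (simp add: powS_negx)
qed

lemma powS_negy': "a + c = 0 \<Longrightarrow> powS n b a = powS n b c"
proof -
  assume "a + c = 0"
  then have "a = - c" by arith
  then show ?thesis by (simp add: powS_negy)
qed

definition R :: "nat \<Rightarrow> int \<Rightarrow> int \<Rightarrow> rat" where
  "R n i j = powS n (i - 1) (j - 1) - powS n (i + 1) (j - 1) - powS n (i - 1) (j + 1) + powS n (i + 1) (j + 1)"

lemma ER: "a = -i-1 \<Longrightarrow> b = -j-1 \<Longrightarrow> E n a b = R n i j"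
proof -
  assume a: "a = -i-1" and b: "b = -j-1"
  have 1: "-a-2 = i-1" "-b-2 = j-1" using a b by simp_all
  have 2: "powS n a b = powS n (i+1) (j+1)"
    using powS_negx'[of a "i+1" n b] powS_negy'[of b "j+1" n "i+1"] a b by simp
  have 3: "powS n (i-1) b = powS n (i-1) (j+1)"
    using powS_negy'[of b "j+1" n "i-1"] b by simp
  have 4: "powS n a (j-1) = powS n (i+1) (j-1)"
    using powS_negx'[of a "i+1" n "j-1"] a by simp
  show ?thesis unfolding E_def R_def 1 2 3 4 by simp
qed

lemma R_neg: "R n (-i) j = - R n i j"
proof -
  have "powS n (-i-1) k = powS n (i+1) k" "powS n (-i+1) k = powS n (i-1) k" for k
    using powS_negx'[of "-i-1" "i+1" n k] powS_negx'[of "-i+1" "i-1" n k] by simp_all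
  then show ?thesis unfolding R_def by simp
qed

lemma F_0: "satisfies_eqn F \<Longrightarrow> F i j 0 = (if i = -1 \<and> j = -1 then 1 else 0)"
  unfolding satisfies_eqn_def
  by (drule spec[of _ i], drule spec[of _ j], drule spec[of _ 0])
     (simp add: mono_mul_def monom_def)

lemma F_Suc: "satisfies_eqn F \<Longrightarrow> F i j (Suc n) = F (i - 1) j n + F (i + 1) j n + F i (j - 1) n + F i (j + 1) n
   - (if i = -1 then F 0 j n else 0) - (if j = -1 then F i 0 n else 0)"
  unfolding satisfies_eqn_def
  apply (drule spec[of _ i], drule spec[of _ j], drule spec[of _ "Suc n"])
  apply (simp add: mono_mul_def monom_def S_mul_def coeff_x0_def coeff_y0_def)
  apply (auto simp: algebra_simps)
  done

lemma main_F1: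
  assumes F: "satisfies_eqn F"
  shows "i + a = -1 \<Longrightarrow> j + b = -1 \<Longrightarrow> xneg (yneg F) i j n = Qser a b n"
proof (induction n arbitrary: i j a b)
  case 0
  then show ?case by (auto simp: xneg_def yneg_def F_0[OF F] Qser_0)
next
  case (Suc n)
  show ?case
  proof (cases "i < 0 \<and> j < 0")
    case True
    have h1: "F (i-1) j n = Qser (a+1) b n"
      using Suc.IH[of "i-1" "a+1" j b] True Suc.prems by (simp add: xneg_def yneg_def)
    have h3: "F i (j-1) n = Qser a (b+1) n"
      using Suc.IH[of i a "j-1" "b+1"] True Suc.prems by (simp add: xneg_def yneg_def)
    have h2: "F (i+1) j n - (if i = -1 then F 0 j n else 0) = Qser (a-1) b n"
    proof (cases "i = -1")
      case True
      with Suc.prems have "a - 1 < 0" by simp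
      then show ?thesis using True Qser_neg[of "a-1" b n] by simp
    next
      case False
      then show ?thesis
        using Suc.IH[of "i+1" "a-1" j b] True Suc.prems by (simp add: xneg_def yneg_def)
    qed
    have h4: "F i (j+1) n - (if j = -1 then F i 0 n else 0) = Qser a (b-1) n"
    proof (cases "j = -1")
      case True
      with Suc.prems have "b - 1 < 0" by simp
      then show ?thesis using True Qser_neg[of a "b-1" n] by simp
    next
      case False
      then show ?thesis
        using Suc.IH[of i a "j+1" "b-1"] True Suc.prems by (simp add: xneg_def yneg_def)
    qed
    have ab: "0 \<le> a \<and> 0 \<le> b" using True Suc.prems by simp
    have "xneg (yneg F) i j (Suc n) = F i j (Suc n)" using True by (simp add: xneg_def yneg_def)
    also have "\<dots> = F (i-1) j n + (F (i+1) j n - (if i = -1 then F 0 j n else 0))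
        + F i (j-1) n + (F i (j+1) n - (if j = -1 then F i 0 n else 0))"
      by (subst F_Suc[OF F]) simp
    also have "\<dots> = Qser a b (Suc n)"
      unfolding h1 h2 h3 h4 Qser_Suc[of a b n] using ab by (simp add: algebra_simps)
    finally show ?thesis .
  next
    case False
    then have "\<not> (0 \<le> a \<and> 0 \<le> b)" using Suc.prems by auto
    then show ?thesis using False Qser_neg[of a b "Suc n"] by (auto simp: xneg_def yneg_def)
  qed
qed

lemma F1R:
  assumes F: "satisfies_eqn F"
  shows "xneg (yneg F) i j n = (if i < 0 \<and> j < 0 then R n i j else 0)"
proof -
  have "xneg (yneg F) i j n = Qser (-i-1) (-j-1) n" by (rule main_F1[OF F]) simp_all
  also have "\<dots> = (if i < 0 \<and> j < 0 then R n i j else 0)"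
    by (auto simp: Qser_E intro: ER)
  finally show ?thesis .
qed

theorem mainTheorem2:
  fixes F :: lser
  assumes "is_lser F" and "satisfies_eqn F"
  defines "F1 \<equiv> xneg (yneg F)"
  shows "F1 = mono_mul (-1) (-1) 0 (subst_xinv (subst_yinv Qser))
         \<and> (\<lambda>i j n. F1 i j n - subst_xinv F1 i j n) = yneg (numer_mul recip_1_minus_St)"
proof
  show "F1 = mono_mul (-1) (-1) 0 (subst_xinv (subst_yinv Qser))"
  proof (intro ext)
    fix i j n
    show "F1 i j n = mono_mul (-1) (-1) 0 (subst_xinv (subst_yinv Qser)) i j n"
      unfolding F1_def mono_mul_def subst_xinv_def subst_yinv_def
      by (simp add: main_F1[OF assms(2)])
  qed
next
  show "(\<lambda>i j n. F1 i j n - subst_xinv F1 i j n) = yneg (numer_mul recip_1_minus_St)"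
  proof (intro ext)
    fix i j n
    have R0: "R n 0 j = 0" using R_neg[of n 0 j] by simp
    have rhs: "yneg (numer_mul recip_1_minus_St) i j n = (if j < 0 then R n i j else 0)"
      by (simp add: yneg_def numer_mul_def recip_1_minus_St_def R_def)
    show "F1 i j n - subst_xinv F1 i j n = yneg (numer_mul recip_1_minus_St) i j n"
      unfolding rhs subst_xinv_def F1_def F1R[OF assms(2)]
      using R_neg[of n i j] R0 by (cases "i < 0"; cases "i = 0") auto
  qed
qed

end
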